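(* (a) Let $(A,\succ_A,\prec_A)$ be an anti-pre-Leibniz algebra with sub-adjacent Leibniz algebra $(A,\circ_A)$. Then $A\oplus A^*$ with $$(x+a^* )\circ_d(y+b^* )=x\circ_A y-\mathcal L^*_{\succ_A}(x)b^*+(\mathcal L^*_{\succ_A}+\mathcal R^*_{\prec_A})(y)a^*$$ is a Leibniz algebra, and the bilinear form $\omega_p(x+a^*,y+b^* )=\langle x,b^*\rangle-\langle a^*,y\rangle$ is a nondegenerate skew-symmetric $2$-cocycle on it. (b) Conversely, let $(A,\circ_A)$ be a Leibniz algebra with a representation $(l,r,A^* )$, and consider the Leibniz algebra $A\oplus A^*$ with $(x+a^* )\circ_d(y+b^* )=x\circ_A y+l(x)b^*+r(y)a^*$. If $\omega_p$ (as in (a)) is a $2$-cocycle on this Leibniz algebra, then there is a compatible anti-pre-Leibniz algebra $(A,\succ_A,\prec_A)$ of $(A,\circ_A)$ such that $l=-\mathcal L^*_{\succ_A}$ and $r=\mathcal L^*_{\succ_A}+\mathcal R^*_{\prec_A}$.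
   Context: All vector spaces are finite-dimensional over a field $\mathbb K$ of characteristic zero. For a multiplication $\ast$, $\mathcal L_\ast(x)y=x\ast y$, $\mathcal R_\ast(x)y=y\ast x$; for $f:A\to\mathrm{End}(V)$, $f^*:A\to\mathrm{End}(V^* )$ is $\langle f^*(x)u^*,v\rangle=-\langle u^*,f(x)v\rangle$. A Leibniz algebra is a vector space $A$ with a multiplication $\circ_A$ satisfying $x\circ_A(y\circ_A z)=(x\circ_A y)\circ_A z+y\circ_A(x\circ_A z)$. A representation of $(A,\circ_A)$ is a triple $(l,r,V)$ with linear maps $l,r:A\to\mathrm{End}(V)$ such that for all $x,y\in A,v\in V$: $l(x\circ_A y)v=l(x)l(y)v-l(y)l(x)v$; $r(x\circ_A y)v=l(x)r(y)v-r(y)l(x)v$; $r(y)l(x)v=-r(y)r(x)v$ (equivalently, $x\circ_A y+l(x)v+r(y)u$ defines a Leibniz algebra on $A\oplus V$). A bilinear form $\omega$ on a Leibniz algebra $(B,\circ)$ is a $2$-cocycle if $\omega(z,x\circ y)=\omega(x,y\circ z+z\circ y)-\omega(y,x\circ z)$ for all $x,y,z\in B$. An anti-pre-Leibniz algebra is a vector space $A$ with multiplications $\succ_A,\prec_A$ such that, with $x\circ y=x\succ_A y+x\prec_A y$, for all $x,y,z$: (AL1) $(x\circ y)\prec_A z=x\succ_A(y\circ z)-y\succ_A(x\circ z)$; (AL2) $(x\circ y)\succ_A z=y\succ_A(x\succ_A z)-x\succ_A(y\succ_A z)$; (AL3) $x\prec_A(y\circ z)=(y\succ_A x)\prec_A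 z-y\succ_A(x\prec_A z)$; (AL4) $(x\succ_A y)\prec_A z=-(y\prec_A x)\prec_A z$. Its sub-adjacent Leibniz algebra is $(A,\circ_A)$ with $\circ_A=\succ_A+\prec_A$; a compatible anti-pre-Leibniz algebra of a Leibniz algebra $(A,\circ_A)$ is an anti-pre-Leibniz algebra $(A,\succ_A,\prec_A)$ with $\succ_A+\prec_A=\circ_A$. *)

theory Defs
  imports Main
begin

text \<open>Coordinate model: a finite-dimensional space A over the field 'k is 'n \<Rightarrow> 'k with
 'n a finite index type (a basis). The dual space A* is also modelled as 'n \<Rightarrow> 'k,
 with the natural pairing with respect to the dual basis. The direct sum A \<oplus> A* is
 ('n + 'n) \<Rightarrow> 'k: the Inl-coordinates give the A-component, the Inr-coordinates the A*-component.\<close>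

definition vzero :: "'n \<Rightarrow> 'k::field" where "vzero = (\<lambda>i. 0)"
definition vadd :: "('n \<Rightarrow> 'k::field) \<Rightarrow> ('n \<Rightarrow> 'k) \<Rightarrow> ('n \<Rightarrow> 'k)"
  where "vadd x y = (\<lambda>i. x i + y i)"
definition vneg :: "('n \<Rightarrow> 'k::field) \<Rightarrow> ('n \<Rightarrow> 'k)" where "vneg x = (\<lambda>i. - x i)"
definition vscale :: "'k::field \<Rightarrow> ('n \<Rightarrow> 'k) \<Rightarrow> ('n \<Rightarrow> 'k)" where "vscale c x = (\<lambda>i. c * x i)"

definition lin :: "(('n \<Rightarrow> 'k::field) \<Rightarrow> ('m \<Rightarrow> 'k)) \<Rightarrow> bool" where
  "lin f \<longleftrightarrow> (\<forall>x y. f (vadd x y) = vadd (f x) (f y)) \<and> (\<forall>c x. f (vscale c x) = vscale c (f x))"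

definition bilin :: "(('n \<Rightarrow> 'k::field) \<Rightarrow> ('m \<Rightarrow> 'k) \<Rightarrow> ('p \<Rightarrow> 'k)) \<Rightarrow> bool" where
  "bilin m \<longleftrightarrow> (\<forall>x. lin (m x)) \<and> (\<forall>y. lin (\<lambda>x. m x y))"

definition bilin_form :: "(('m \<Rightarrow> 'k::field) \<Rightarrow> ('m \<Rightarrow> 'k) \<Rightarrow> 'k) \<Rightarrow> bool" where
  "bilin_form w \<longleftrightarrow>
     (\<forall>x y z. w (vadd x y) z = w x z + w y z) \<and> (\<forall>c x z. w (vscale c x) z = c * w x z) \<and>
     (\<forall>x y z. w z (vadd x y) = w z x + w z y) \<and> (\<forall>c x z. w z (vscale c x) = c * w z x)"

definition dpair :: "('n::finite \<Rightarrow> 'k::field) \<Rightarrow> ('n \<Rightarrow> 'k) \<Rightarrow> 'k" where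
  "dpair x a = (\<Sum>i\<in>UNIV. x i * a i)"

definition unitv :: "'n \<Rightarrow> ('n \<Rightarrow> 'k::field)" where "unitv j = (\<lambda>i. if i = j then 1 else 0)"

text \<open>Dual map f*: A \<rightarrow> End(A*), \<langle>f*(x)u*, v\<rangle> = - \<langle>u*, f(x)v\<rangle>, written in dual-basis coordinates.\<close>
definition dual_op :: "(('n::finite \<Rightarrow> 'k::field) \<Rightarrow> ('n \<Rightarrow> 'k) \<Rightarrow> ('n \<Rightarrow> 'k))
     \<Rightarrow> ('n \<Rightarrow> 'k) \<Rightarrow> ('n \<Rightarrow> 'k) \<Rightarrow> ('n \<Rightarrow> 'k)" where
  "dual_op f x u = (\<lambda>j. - dpair (f x (unitv j)) u)"

definition Lmul :: "('a \<Rightarrow> 'b \<Rightarrow> 'c) \<Rightarrow> 'a \<Rightarrow> 'b \<Rightarrow> 'c" where "Lmul m x y = m x y"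
definition Rmul :: "('b \<Rightarrow> 'a \<Rightarrow> 'c) \<Rightarrow> 'a \<Rightarrow> 'b \<Rightarrow> 'c" where "Rmul m x y = m y x"

definition leibniz :: "(('n \<Rightarrow> 'k::field) \<Rightarrow> ('n \<Rightarrow> 'k) \<Rightarrow> ('n \<Rightarrow> 'k)) \<Rightarrow> bool" where
  "leibniz m \<longleftrightarrow> bilin m \<and>
     (\<forall>x y z. m x (m y z) = vadd (m (m x y) z) (m y (m x z)))"

definition is_rep :: "(('n \<Rightarrow> 'k::field) \<Rightarrow> ('n \<Rightarrow> 'k) \<Rightarrow> ('n \<Rightarrow> 'k))
   \<Rightarrow> (('n \<Rightarrow> 'k) \<Rightarrow> ('v \<Rightarrow> 'k) \<Rightarrow> ('v \<Rightarrow> 'k))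
   \<Rightarrow> (('n \<Rightarrow> 'k) \<Rightarrow> ('v \<Rightarrow> 'k) \<Rightarrow> ('v \<Rightarrow> 'k)) \<Rightarrow> bool" where
  "is_rep m l r \<longleftrightarrow> bilin l \<and> bilin r \<and>
     (\<forall>x y v. l (m x y) v = vadd (l x (l y v)) (vneg (l y (l x v)))) \<and>
     (\<forall>x y v. r (m x y) v = vadd (l x (r y v)) (vneg (r y (l x v)))) \<and>
     (\<forall>x y v. r y (l x v) = vneg (r y (r x v)))"

definition anti_pre_leibniz :: "(('n \<Rightarrow> 'k::field) \<Rightarrow> ('n \<Rightarrow> 'k) \<Rightarrow> ('n \<Rightarrow> 'k))
   \<Rightarrow> (('n \<Rightarrow> 'k) \<Rightarrow> ('n \<Rightarrow> 'k) \<Rightarrow> ('n \<Rightarrow> 'k)) \<Rightarrow> bool" where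
  "anti_pre_leibniz sc pc \<longleftrightarrow> bilin sc \<and> bilin pc \<and>
     (let cm = (\<lambda>x y. vadd (sc x y) (pc x y)) in
     (\<forall>x y z. pc (cm x y) z = vadd (sc x (cm y z)) (vneg (sc y (cm x z)))) \<and>
     (\<forall>x y z. sc (cm x y) z = vadd (sc y (sc x z)) (vneg (sc x (sc y z)))) \<and>
     (\<forall>x y z. pc x (cm y z) = vadd (pc (sc y x) z) (vneg (sc y (pc x z)))) \<and>
     (\<forall>x y z. pc (sc x y) z = vneg (pc (pc y x) z)))"

definition fstc :: "('n + 'n \<Rightarrow> 'k) \<Rightarrow> ('n \<Rightarrow> 'k)" where "fstc X = (\<lambda>i. X (Inl i))"
definition sndc :: "('n + 'n \<Rightarrow> 'k) \<Rightarrow> ('n \<Rightarrow> 'k)" where "sndc X = (\<lambda>i. X (Inr i))"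

definition dsum_mult :: "(('n \<Rightarrow> 'k::field) \<Rightarrow> ('n \<Rightarrow> 'k) \<Rightarrow> ('n \<Rightarrow> 'k))
   \<Rightarrow> (('n \<Rightarrow> 'k) \<Rightarrow> ('n \<Rightarrow> 'k) \<Rightarrow> ('n \<Rightarrow> 'k))
   \<Rightarrow> (('n \<Rightarrow> 'k) \<Rightarrow> ('n \<Rightarrow> 'k) \<Rightarrow> ('n \<Rightarrow> 'k))
   \<Rightarrow> ('n + 'n \<Rightarrow> 'k) \<Rightarrow> ('n + 'n \<Rightarrow> 'k) \<Rightarrow> ('n + 'n \<Rightarrow> 'k)" where
  "dsum_mult m l r X Y =
     case_sum (m (fstc X) (fstc Y)) (vadd (l (fstc X) (sndc Y)) (r (fstc Y) (sndc X)))"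

definition omega_p :: "('n::finite + 'n \<Rightarrow> 'k::field) \<Rightarrow> ('n + 'n \<Rightarrow> 'k) \<Rightarrow> 'k" where
  "omega_p X Y = dpair (fstc X) (sndc Y) - dpair (fstc Y) (sndc X)"

definition cocycle :: "(('m \<Rightarrow> 'k::field) \<Rightarrow> ('m \<Rightarrow> 'k) \<Rightarrow> ('m \<Rightarrow> 'k))
   \<Rightarrow> (('m \<Rightarrow> 'k) \<Rightarrow> ('m \<Rightarrow> 'k) \<Rightarrow> 'k) \<Rightarrow> bool" where
  "cocycle m w \<longleftrightarrow> (\<forall>x y z. w z (m x y) = w x (vadd (m y z) (m z y)) - w y (m x z))"

definition skew_sym :: "('m \<Rightarrow> 'm \<Rightarrow> 'k::field) \<Rightarrow> bool" where
  "skew_sym w \<longleftrightarrow> (\<forall>x y. w x y = - w y x)"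

definition nondegenerate :: "(('m \<Rightarrow> 'k::field) \<Rightarrow> ('m \<Rightarrow> 'k) \<Rightarrow> 'k) \<Rightarrow> bool" where
  "nondegenerate w \<longleftrightarrow> (\<forall>x. (\<forall>y. w x y = 0) \<longrightarrow> x = vzero)"

end

theory Submission imports Defs "HOL-Library.Function_Algebras" begin

lemma vadd_eq: "vadd = (+)" by (auto simp: vadd_def fun_eq_iff)
lemma vneg_eq: "vneg = uminus" by (auto simp: vneg_def fun_eq_iff)
lemma vzero_eq: "vzero = 0" by (auto simp: vzero_def fun_eq_iff)

lemma lin_add: "lin f \<Longrightarrow> f (x + y) = f x + f y" by (simp add: lin_def vadd_eq)
lemma lin_scale: "lin f \<Longrightarrow> f (vscale c x) = vscale c (f x)" by (simp add: lin_def)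
lemma vscale_0[simp]: "vscale 0 g = 0" by (simp add: vscale_def fun_eq_iff)
lemma lin_zero: "lin (f::('n \<Rightarrow> 'k::field) \<Rightarrow> ('m \<Rightarrow> 'k)) \<Longrightarrow> f 0 = 0"
  by (metis lin_scale vscale_0)
lemma lin_neg: "lin (f::('n \<Rightarrow> 'k::field) \<Rightarrow> ('m \<Rightarrow> 'k)) \<Longrightarrow> f (- x) = - f x"
proof -
  assume l: "lin f"
  have "f (- x) + f x = f (- x + x)" using lin_add[OF l, of "-x" x] by simp
  also have "\<dots> = 0" using lin_zero[OF l] by simp
  finally show ?thesis by (metis add_eq_0_iff2 add.commute)
qed
lemma lin_diff: "lin (f::('n \<Rightarrow> 'k::field) \<Rightarrow> ('m \<Rightarrow> 'k)) \<Longrightarrow> f (x - y) = f x - f y"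
  using lin_add[of f x "-y"] lin_neg[of f y] by simp
lemma lin_sum: "lin (f::('n \<Rightarrow> 'k::field) \<Rightarrow> ('m \<Rightarrow> 'k)) \<Longrightarrow> f (sum g S) = (\<Sum>j\<in>S. f (g j))"
proof (induction S rule: infinite_finite_induct)
  case (infinite A) then show ?case using lin_zero[of f] by (metis sum.infinite)
next
  case empty then show ?case using lin_zero[of f] by (simp only: sum.empty)
next
  case (insert x F)
  have "f (sum g (insert x F)) = f (g x + sum g F)" by (simp only: sum.insert[OF insert(1,2)])
  also have "\<dots> = f (g x) + f (sum g F)" using lin_add[OF insert(4)] by blast
  also have "\<dots> = f (g x) + (\<Sum>j\<in>F. f (g j))" using insert(3,4) by simp
  also have "\<dots> = (\<Sum>j\<in>insert x F. f (g j))" by (simp only: sum.insert[OF insert(1,2)])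
  finally show ?case .
qed

lemma sum_apply: "(sum g S) i = (\<Sum>j\<in>S. g j i)"
  by (induction S rule: infinite_finite_induct) auto

lemma vec_expand: "(x::'n::finite \<Rightarrow> 'k::field) = (\<Sum>j\<in>UNIV. vscale (x j) (unitv j))"
  by (auto simp: fun_eq_iff vscale_def unitv_def sum_apply if_distrib cong: if_cong)

lemma lin_expand: "lin (f::('n::finite \<Rightarrow> 'k::field) \<Rightarrow> ('m \<Rightarrow> 'k)) \<Longrightarrow> f x i = (\<Sum>j\<in>UNIV. x j * f (unitv j) i)"
proof -
  assume l: "lin f"
  have "f x = f (\<Sum>j\<in>UNIV. vscale (x j) (unitv j))" by (subst vec_expand, rule refl)
  also have "\<dots> = (\<Sum>j\<in>UNIV. vscale (x j) (f (unitv j)))" by (simp add: lin_sum[OF l] lin_scale[OF l])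
  finally show ?thesis by (simp add: sum_apply vscale_def)
qed



lemma vscale_add: "vscale c (x + y) = vscale c x + vscale c y"
  by (simp add: vscale_def fun_eq_iff algebra_simps)

lemma bilin_lin1: "bilin m \<Longrightarrow> lin (m x)" by (simp add: bilin_def)
lemma bilin_lin2: "bilin m \<Longrightarrow> lin (\<lambda>x. m x y)" by (simp add: bilin_def)

lemma bl_add1: "bilin (m::('n \<Rightarrow> 'k::field) \<Rightarrow> ('q \<Rightarrow> 'k) \<Rightarrow> ('p \<Rightarrow> 'k)) \<Longrightarrow> m (x + y) z = m x z + m y z"
  using lin_add[OF bilin_lin2[of m z]] by simp
lemma bl_add2: "bilin (m::('n \<Rightarrow> 'k::field) \<Rightarrow> ('q \<Rightarrow> 'k) \<Rightarrow> ('p \<Rightarrow> 'k)) \<Longrightarrow> m z (x + y) = m z x + m z y"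
  using lin_add[OF bilin_lin1[of m z]] by simp
lemma bl_neg1: "bilin (m::('n \<Rightarrow> 'k::field) \<Rightarrow> ('q \<Rightarrow> 'k) \<Rightarrow> ('p \<Rightarrow> 'k)) \<Longrightarrow> m (- x) z = - m x z"
  using lin_neg[OF bilin_lin2[of m z]] by simp
lemma bl_neg2: "bilin (m::('n \<Rightarrow> 'k::field) \<Rightarrow> ('q \<Rightarrow> 'k) \<Rightarrow> ('p \<Rightarrow> 'k)) \<Longrightarrow> m z (- x) = - m z x"
  using lin_neg[OF bilin_lin1[of m z]] by simp
lemma bl_diff1: "bilin (m::('n \<Rightarrow> 'k::field) \<Rightarrow> ('q \<Rightarrow> 'k) \<Rightarrow> ('p \<Rightarrow> 'k)) \<Longrightarrow> m (x - y) z = m x z - m y z"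
  using lin_diff[OF bilin_lin2[of m z]] by simp
lemma bl_diff2: "bilin (m::('n \<Rightarrow> 'k::field) \<Rightarrow> ('q \<Rightarrow> 'k) \<Rightarrow> ('p \<Rightarrow> 'k)) \<Longrightarrow> m z (x - y) = m z x - m z y"
  using lin_diff[OF bilin_lin1[of m z]] by simp
lemma bl_zero1: "bilin (m::('n \<Rightarrow> 'k::field) \<Rightarrow> ('q \<Rightarrow> 'k) \<Rightarrow> ('p \<Rightarrow> 'k)) \<Longrightarrow> m 0 z = 0"
  using lin_zero[OF bilin_lin2[of m z]] by simp
lemma bl_zero2: "bilin (m::('n \<Rightarrow> 'k::field) \<Rightarrow> ('q \<Rightarrow> 'k) \<Rightarrow> ('p \<Rightarrow> 'k)) \<Longrightarrow> m z 0 = 0"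
  using lin_zero[OF bilin_lin1[of m z]] by simp
lemma bl_scale1: "bilin m \<Longrightarrow> m (vscale c x) z = vscale c (m x z)"
  using lin_scale[OF bilin_lin2[of m z]] by simp
lemma bl_scale2: "bilin m \<Longrightarrow> m z (vscale c x) = vscale c (m z x)"
  using lin_scale[OF bilin_lin1[of m z]] by simp

lemmas bl_simps = bl_add1 bl_add2 bl_neg1 bl_neg2 bl_diff1 bl_diff2 bl_zero1 bl_zero2

lemma bilinI:
  assumes "\<And>x y z. m (x + y) z = m x z + m y z" "\<And>x y z. m z (x + y) = m z x + m z y"
    "\<And>c x z. m (vscale c x) z = vscale c (m x z)" "\<And>c x z. m z (vscale c x) = vscale c (m z x)"
  shows "bilin m"
  using assms by (simp add: bilin_def lin_def vadd_eq)

lemma dp_add1: "dpair (x + y) a = dpair x a + dpair y a"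
  by (simp add: dpair_def algebra_simps sum.distrib)
lemma dp_add2: "dpair x (a + b) = dpair x a + dpair x b"
  by (simp add: dpair_def algebra_simps sum.distrib)
lemma dp_neg1: "dpair (- x) a = - dpair x a"
  by (simp add: dpair_def sum_negf)
lemma dp_neg2: "dpair x (- a) = - dpair x a"
  by (simp add: dpair_def sum_negf)
lemma dp_diff1: "dpair (x - y) a = dpair x a - dpair y a"
  by (simp add: dpair_def algebra_simps sum_subtractf)
lemma dp_diff2: "dpair x (a - b) = dpair x a - dpair x b"
  by (simp add: dpair_def algebra_simps sum_subtractf)
lemma dp_zero1: "dpair 0 a = 0" by (simp add: dpair_def)
lemma dp_zero2: "dpair x 0 = 0" by (simp add: dpair_def)
lemma dp_scale1: "dpair (vscale c x) a = c * dpair x a"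
  by (simp add: dpair_def vscale_def sum_distrib_left algebra_simps)
lemma dp_scale2: "dpair x (vscale c a) = c * dpair x a"
  by (simp add: dpair_def vscale_def sum_distrib_left algebra_simps)
lemmas dp_simps = dp_add1 dp_add2 dp_neg1 dp_neg2 dp_diff1 dp_diff2 dp_zero1 dp_zero2 dp_scale1 dp_scale2

lemma dp_unit1: "dpair (unitv j) a = a j"
proof -
  have e: "\<And>i. unitv j i * a i = (if j = i then a j else 0)" by (auto simp: unitv_def)
  have "dpair (unitv j) a = (\<Sum>i\<in>UNIV. if j = i then a j else 0)" unfolding dpair_def e by (rule refl)
  thus ?thesis by simp
qed
lemma dp_unit2: "dpair x (unitv j) = x j"
proof -
  have e: "\<And>i. x i * unitv j i = (if j = i then x j else 0)" by (auto simp: unitv_def)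
  have "dpair x (unitv j) = (\<Sum>i\<in>UNIV. if j = i then x j else 0)" unfolding dpair_def e by (rule refl)
  thus ?thesis by simp
qed

lemma extS: "(\<And>w. dpair w u = dpair w v) \<Longrightarrow> u = v"
  by (metis dp_unit1 ext)
lemma extA: "(\<And>a. dpair p a = dpair q a) \<Longrightarrow> p = q"
  by (metis dp_unit2 ext)

lemma dp_dual: "lin (f y) \<Longrightarrow> dpair w (dual_op f y u) = - dpair (f y w) u"
proof -
  assume l: "lin (f y)"
  have "dpair w (dual_op f y u) = (\<Sum>j\<in>UNIV. w j * (- (\<Sum>i\<in>UNIV. f y (unitv j) i * u i)))"
    by (simp add: dpair_def dual_op_def)
  also have "\<dots> = - (\<Sum>i\<in>UNIV. \<Sum>j\<in>UNIV. w j * f y (unitv j) i * u i)"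
    by (subst sum.swap) (simp add: sum_distrib_left sum_negf algebra_simps)
  also have "\<dots> = - (\<Sum>i\<in>UNIV. f y w i * u i)"
    by (simp add: lin_expand[OF l, of w] sum_distrib_right)
  finally show ?thesis by (simp add: dpair_def)
qed

lemma dp_recon: "lin g \<Longrightarrow> dpair (\<lambda>i. dpair z (g (unitv i))) b = dpair z (g b)"
proof -
  assume l: "lin g"
  have "dpair (\<lambda>i. dpair z (g (unitv i))) b = (\<Sum>i\<in>UNIV. (\<Sum>j\<in>UNIV. z j * g (unitv i) j) * b i)"
    by (simp add: dpair_def)
  also have "\<dots> = (\<Sum>i\<in>UNIV. \<Sum>j\<in>UNIV. z j * g (unitv i) j * b i)"
    by (simp add: sum_distrib_right)
  also have "\<dots> = (\<Sum>j\<in>UNIV. \<Sum>i\<in>UNIV. z j * g (unitv i) j * b i)"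
    by (rule sum.swap)
  also have "\<dots> = (\<Sum>j\<in>UNIV. z j * (\<Sum>i\<in>UNIV. b i * g (unitv i) j))"
    by (simp add: sum_distrib_left algebra_simps)
  also have "\<dots> = dpair z (g b)"
    by (simp add: dpair_def lin_expand[OF l, of b])
  finally show ?thesis .
qed


lemma fstc_add[simp]: "fstc (X + Y) = fstc X + fstc Y" by (simp add: fstc_def fun_eq_iff)
lemma sndc_add[simp]: "sndc (X + Y) = sndc X + sndc Y" by (simp add: sndc_def fun_eq_iff)
lemma fstc_scale[simp]: "fstc (vscale c X) = vscale c (fstc X)" by (simp add: fstc_def vscale_def fun_eq_iff)
lemma sndc_scale[simp]: "sndc (vscale c X) = vscale c (sndc X)" by (simp add: sndc_def vscale_def fun_eq_iff)
lemma fstc_case[simp]: "fstc (case_sum x a) = x" by (simp add: fstc_def)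
lemma sndc_case[simp]: "sndc (case_sum x a) = a" by (simp add: sndc_def)
lemma fstc_dm[simp]: "fstc (dsum_mult m l r X Y) = m (fstc X) (fstc Y)" by (simp add: dsum_mult_def)
lemma sndc_dm[simp]: "sndc (dsum_mult m l r X Y) = l (fstc X) (sndc Y) + r (fstc Y) (sndc X)"
  by (simp add: dsum_mult_def vadd_eq)

lemma fstc_vzero: "fstc vzero = 0" by (simp add: fstc_def vzero_def fun_eq_iff)
lemma sndc_vzero: "sndc vzero = 0" by (simp add: sndc_def vzero_def fun_eq_iff)

lemma dsum_ext: assumes "fstc F = fstc G" "sndc F = sndc G" shows "F = G"
proof
  fix s show "F s = G s"
  proof (cases s)
    case (Inl i) then show ?thesis using fun_cong[OF assms(1), of i] by (simp add: fstc_def)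
  next
    case (Inr i) then show ?thesis using fun_cong[OF assms(2), of i] by (simp add: sndc_def)
  qed
qed

lemma semidirect_leibniz:
  fixes m l r :: "('n \<Rightarrow> 'k::field) \<Rightarrow> ('n \<Rightarrow> 'k) \<Rightarrow> ('n \<Rightarrow> 'k)"
  assumes lm: "leibniz m" and rp: "is_rep m l r"
  shows "leibniz (dsum_mult m l r)"
proof -
  have bm: "bilin m" using lm by (simp add: leibniz_def)
  have bl: "bilin l" and br: "bilin r" using rp by (auto simp: is_rep_def)
  have r1: "l (m x y) v = l x (l y v) + - l y (l x v)" for x y v using rp unfolding is_rep_def vadd_eq vneg_eq by blast
  have r2: "r (m x y) v = l x (r y v) + - r y (l x v)" for x y v using rp unfolding is_rep_def vadd_eq vneg_eq by blast
  have r3: "r y (l x v) = - r y (r x v)" for x y v using rp unfolding is_rep_def vadd_eq vneg_eq by blast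
  have lid: "m x (m y z) = m (m x y) z + m y (m x z)" for x y z using lm unfolding leibniz_def vadd_eq by blast
  have "bilin (dsum_mult m l r)"
    by (rule bilinI; rule dsum_ext)
       (simp_all add: bl_add1[OF bm] bl_add2[OF bm] bl_add1[OF bl] bl_add2[OF bl] bl_add1[OF br] bl_add2[OF br]
          bl_scale1[OF bm] bl_scale2[OF bm] bl_scale1[OF bl] bl_scale2[OF bl] bl_scale1[OF br] bl_scale2[OF br] vscale_add fun_eq_iff)
  moreover have "dsum_mult m l r X (dsum_mult m l r Y Z) =
      dsum_mult m l r (dsum_mult m l r X Y) Z + dsum_mult m l r Y (dsum_mult m l r X Z)" for X Y Z
  proof (rule dsum_ext)
    show "fstc (dsum_mult m l r X (dsum_mult m l r Y Z)) =
      fstc (dsum_mult m l r (dsum_mult m l r X Y) Z + dsum_mult m l r Y (dsum_mult m l r X Z))"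
      by (simp only: fstc_dm fstc_add) (rule lid)
    show "sndc (dsum_mult m l r X (dsum_mult m l r Y Z)) =
      sndc (dsum_mult m l r (dsum_mult m l r X Y) Z + dsum_mult m l r Y (dsum_mult m l r X Z))"
      apply (simp only: sndc_dm sndc_add fstc_dm fstc_add bl_simps[OF bl] bl_simps[OF br] r1 r2 r3)
      apply (rule ext) apply (simp only: plus_fun_apply uminus_apply)
      apply (simp add: algebra_simps)
      done
  qed
  ultimately show ?thesis unfolding leibniz_def vadd_eq by blast
qed

lemma omega_bilin: "bilin_form omega_p"
  by (simp add: bilin_form_def omega_p_def vadd_eq dp_simps algebra_simps)
lemma omega_skew: "skew_sym omega_p"
  by (simp add: skew_sym_def omega_p_def)
lemma omega_nondeg: "nondegenerate omega_p"
  unfolding nondegenerate_def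
proof (intro allI impI)
  fix X :: "'n::finite + 'n \<Rightarrow> 'k::field"
  assume h: "\<forall>Y. omega_p X Y = 0"
  show "X = vzero"
  proof (rule dsum_ext)
    show "fstc X = fstc vzero"
    proof
      fix j
      have "omega_p X (case_sum 0 (unitv j)) = 0" using h by blast
      thus "fstc X j = fstc vzero j" by (simp add: omega_p_def dp_unit2 dp_zero1 fstc_vzero)
    qed
    show "sndc X = sndc vzero"
    proof
      fix j
      have "omega_p X (case_sum (unitv j) 0) = 0" using h by blast
      thus "sndc X j = sndc vzero j" by (simp add: omega_p_def dp_unit1 dp_zero2 sndc_vzero)
    qed
  qed
qed


locale pp =
  fixes sc pc cm L R :: "('n::finite \<Rightarrow> 'k::field_char_0) \<Rightarrow> ('n \<Rightarrow> 'k) \<Rightarrow> ('n \<Rightarrow> 'k)"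
  assumes bsc: "bilin sc" and bpc: "bilin pc"
    and cmdef: "\<And>x y. cm x y = sc x y + pc x y"
    and PL: "\<And>w x b. dpair w (L x b) = dpair (sc x w) b"
    and PR: "\<And>w y a. dpair w (R y a) = - dpair (sc y w) a - dpair (pc w y) a"
begin

lemma bcm: "bilin cm"
  by (rule bilinI) (simp_all add: cmdef bl_add1[OF bsc] bl_add2[OF bsc] bl_add1[OF bpc] bl_add2[OF bpc]
     bl_scale1[OF bsc] bl_scale2[OF bsc] bl_scale1[OF bpc] bl_scale2[OF bpc] vscale_add algebra_simps)

lemma bL: "bilin L"
  by (rule bilinI; rule extS) (simp_all add: PL dp_simps bl_add1[OF bsc] bl_scale1[OF bsc] vadd_eq)

lemma bR: "bilin R"
  by (rule bilinI; rule extS) (simp_all add: PR dp_simps bl_add1[OF bsc] bl_add2[OF bpc] bl_scale1[OF bsc]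
       bl_scale2[OF bpc] algebra_simps)

lemma dp_cm: "dpair (cm x y) a = dpair (sc x y) a + dpair (pc x y) a"
  by (simp add: cmdef dp_simps)

lemma cocyc: "cocycle (dsum_mult cm L R) omega_p"
  unfolding cocycle_def omega_p_def vadd_eq
  apply (intro allI)
  apply (simp only: fstc_dm sndc_dm fstc_add sndc_add)
  apply (simp add: PL PR dp_simps dp_cm bl_simps[OF bsc] bl_simps[OF bpc])
  done

lemma rep1_AL2:
  assumes h: "\<And>x y v. L (cm x y) v = L x (L y v) - L y (L x v)"
  shows "sc (cm x y) z = sc y (sc x z) - sc x (sc y z)"
proof (rule extA)
  fix a
  have "dpair z (L (cm x y) a) = dpair z (L x (L y a) - L y (L x a))" by (simp only: h)
  thus "dpair (sc (cm x y) z) a = dpair (sc y (sc x z) - sc x (sc y z)) a"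
    by (simp add: PL dp_diff1 dp_diff2)
qed

lemma AL2_rep1:
  assumes h: "\<And>x y z. sc (cm x y) z = sc y (sc x z) - sc x (sc y z)"
  shows "L (cm x y) v = L x (L y v) - L y (L x v)"
  by (rule extS) (simp add: PL dp_diff1 dp_diff2 h)

lemma rep3_AL4:
  assumes h: "\<And>x y v. R y (L x v) = - R y (R x v)"
  shows "pc (sc y w) x = - pc (pc w y) x"
proof (rule extA)
  fix v
  have "dpair w (R y (L x v)) = dpair w (- R y (R x v))" by (simp only: h)
  hence "dpair (pc (sc y w) x) v + dpair (pc (pc w y) x) v = 0"
    by (simp add: PL PR dp_simps bl_simps[OF bsc] algebra_simps)
  thus "dpair (pc (sc y w) x) v = dpair (- pc (pc w y) x) v"
    by (simp add: dp_simps add_eq_0_iff)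
qed

lemma AL4_rep3:
  assumes h: "\<And>x y z. pc (sc x y) z = - pc (pc y x) z"
  shows "R y (L x v) = - R y (R x v)"
  by (rule extS) (simp add: PL PR dp_simps bl_simps[OF bsc] h algebra_simps)

lemma rep2_AL3:
  assumes h2: "\<And>x y z. sc (cm x y) z = sc y (sc x z) - sc x (sc y z)"
    and h: "\<And>x y v. R (cm x y) v = L x (R y v) - R y (L x v)"
  shows "pc w (cm x y) = pc (sc x w) y - sc x (pc w y)"
proof (rule extA)
  fix v
  have "dpair w (R (cm x y) v) = dpair w (L x (R y v) - R y (L x v))" by (simp only: h)
  hence "dpair (pc w (cm x y)) v = dpair (pc (sc x w) y) v - dpair (sc x (pc w y)) v"
    by (simp add: PL PR dp_simps h2 algebra_simps)
  thus "dpair (pc w (cm x y)) v = dpair (pc (sc x w) y - sc x (pc w y)) v"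
    by (simp add: dp_simps)
qed

lemma AL3_rep2:
  assumes h2: "\<And>x y z. sc (cm x y) z = sc y (sc x z) - sc x (sc y z)"
    and h: "\<And>x y z. pc x (cm y z) = pc (sc y x) z - sc y (pc x z)"
  shows "R (cm x y) v = L x (R y v) - R y (L x v)"
  by (rule extS) (simp add: PL PR dp_simps h2 h algebra_simps)


lemma apl_iff: "anti_pre_leibniz sc pc \<longleftrightarrow>
   (\<forall>x y z. pc (cm x y) z = sc x (cm y z) - sc y (cm x z)) \<and>
   (\<forall>x y z. sc (cm x y) z = sc y (sc x z) - sc x (sc y z)) \<and>
   (\<forall>x y z. pc x (cm y z) = pc (sc y x) z - sc y (pc x z)) \<and>
   (\<forall>x y z. pc (sc x y) z = - pc (pc y x) z)"
proof -
  have e: "(\<lambda>x y. vadd (sc x y) (pc x y)) = cm" by (simp add: fun_eq_iff cmdef vadd_eq)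
  show ?thesis unfolding anti_pre_leibniz_def Let_def e by (simp add: bsc bpc vadd_eq vneg_eq)
qed

lemma leib_AL1:
  assumes h2: "\<And>x y z. sc (cm x y) z = sc y (sc x z) - sc x (sc y z)"
    and h3: "\<And>x y z. pc x (cm y z) = pc (sc y x) z - sc y (pc x z)"
    and h4: "\<And>x y z. pc (sc x y) z = - pc (pc y x) z"
    and hl: "\<And>x y z. cm x (cm y z) = cm (cm x y) z + cm y (cm x z)"
  shows "pc (cm x y) z = sc x (cm y z) - sc y (cm x z)"
proof (rule ext)
  fix i
  have e0: "cm x (cm y z) i = cm (cm x y) z i + cm y (cm x z) i" using fun_cong[OF hl[of x y z], of i] by simp
  have c1: "cm x (cm y z) i = sc x (cm y z) i + pc x (cm y z) i" by (simp add: cmdef)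
  have c2: "cm (cm x y) z i = sc (cm x y) z i + pc (cm x y) z i" by (simp add: cmdef)
  have c3: "cm y (cm x z) i = sc y (cm x z) i + pc y (cm x z) i" by (simp add: cmdef)
  have e1: "pc x (cm y z) i = pc (sc y x) z i - sc y (pc x z) i" using fun_cong[OF h3[of x y z], of i] by simp
  have e2: "pc y (cm x z) i = pc (sc x y) z i - sc x (pc y z) i" using fun_cong[OF h3[of y x z], of i] by simp
  have e3: "sc (cm x y) z i = sc y (sc x z) i - sc x (sc y z) i" using fun_cong[OF h2[of x y z], of i] by simp
  have e4: "pc (sc y x) z i = - pc (pc x y) z i" using fun_cong[OF h4[of y x z], of i] by simp
  have e5: "pc (cm x y) z i = pc (sc x y) z i + pc (pc x y) z i" by (simp add: cmdef bl_add1[OF bpc])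
  have e6: "sc x (cm y z) i = sc x (sc y z) i + sc x (pc y z) i" by (simp add: cmdef bl_add2[OF bsc])
  have e7: "sc y (cm x z) i = sc y (sc x z) i + sc y (pc x z) i" by (simp add: cmdef bl_add2[OF bsc])
  have "2 * (pc (cm x y) z i - (sc x (cm y z) i - sc y (cm x z) i)) = 0"
    using e0 c1 c2 c3 e1 e2 e3 e4 e5 e6 e7 by algebra
  hence "pc (cm x y) z i - (sc x (cm y z) i - sc y (cm x z) i) = 0"
    by (simp only: mult_eq_0_iff) simp
  thus "pc (cm x y) z i = (sc x (cm y z) - sc y (cm x z)) i" by simp
qed

lemma AL_leib:
  assumes h1: "\<And>x y z. pc (cm x y) z = sc x (cm y z) - sc y (cm x z)"
    and h2: "\<And>x y z. sc (cm x y) z = sc y (sc x z) - sc x (sc y z)"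
    and h3: "\<And>x y z. pc x (cm y z) = pc (sc y x) z - sc y (pc x z)"
    and h4: "\<And>x y z. pc (sc x y) z = - pc (pc y x) z"
  shows "cm x (cm y z) = cm (cm x y) z + cm y (cm x z)"
proof (rule ext)
  fix i
  have c1: "cm x (cm y z) i = sc x (cm y z) i + pc x (cm y z) i" by (simp add: cmdef)
  have c2: "cm (cm x y) z i = sc (cm x y) z i + pc (cm x y) z i" by (simp add: cmdef)
  have c3: "cm y (cm x z) i = sc y (cm x z) i + pc y (cm x z) i" by (simp add: cmdef)
  have e1: "pc x (cm y z) i = pc (sc y x) z i - sc y (pc x z) i" using fun_cong[OF h3[of x y z], of i] by simp
  have e2: "pc y (cm x z) i = pc (sc x y) z i - sc x (pc y z) i" using fun_cong[OF h3[of y x z], of i] by simp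
  have e3: "sc (cm x y) z i = sc y (sc x z) i - sc x (sc y z) i" using fun_cong[OF h2[of x y z], of i] by simp
  have e4: "pc (sc y x) z i = - pc (pc x y) z i" using fun_cong[OF h4[of y x z], of i] by simp
  have e5: "pc (cm x y) z i = pc (sc x y) z i + pc (pc x y) z i" by (simp add: cmdef bl_add1[OF bpc])
  have e6: "sc x (cm y z) i = sc x (sc y z) i + sc x (pc y z) i" by (simp add: cmdef bl_add2[OF bsc])
  have e7: "sc y (cm x z) i = sc y (sc x z) i + sc y (pc x z) i" by (simp add: cmdef bl_add2[OF bsc])
  have e8: "pc (cm x y) z i = sc x (cm y z) i - sc y (cm x z) i" using fun_cong[OF h1[of x y z], of i] by simp
  show "cm x (cm y z) i = (cm (cm x y) z + cm y (cm x z)) i"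
    using c1 c2 c3 e1 e2 e3 e4 e5 e6 e7 e8 by simp algebra
qed


lemma leib_of_AL: assumes "anti_pre_leibniz sc pc" shows "leibniz cm"
proof -
  have A: "\<And>x y z. pc (cm x y) z = sc x (cm y z) - sc y (cm x z)"
    "\<And>x y z. sc (cm x y) z = sc y (sc x z) - sc x (sc y z)"
    "\<And>x y z. pc x (cm y z) = pc (sc y x) z - sc y (pc x z)"
    "\<And>x y z. pc (sc x y) z = - pc (pc y x) z" using assms apl_iff by blast+
  show ?thesis unfolding leibniz_def vadd_eq using bcm AL_leib[OF A] by blast
qed

lemma rep_of_AL: assumes "anti_pre_leibniz sc pc" shows "is_rep cm L R"
proof -
  have A: "\<And>x y z. pc (cm x y) z = sc x (cm y z) - sc y (cm x z)"
    "\<And>x y z. sc (cm x y) z = sc y (sc x z) - sc x (sc y z)"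
    "\<And>x y z. pc x (cm y z) = pc (sc y x) z - sc y (pc x z)"
    "\<And>x y z. pc (sc x y) z = - pc (pc y x) z" using assms apl_iff by blast+
  show ?thesis unfolding is_rep_def vadd_eq vneg_eq
  proof (intro conjI allI)
    show "bilin L" "bilin R" by (rule bL, rule bR)
    fix x y v
    show "L (cm x y) v = L x (L y v) + - L y (L x v)"
      using AL2_rep1[OF A(2), of x y v] by (simp only: diff_conv_add_uminus)
    show "R (cm x y) v = L x (R y v) + - R y (L x v)"
      using AL3_rep2[OF A(2) A(3), of x y v] by (simp only: diff_conv_add_uminus)
    show "R y (L x v) = - R y (R x v)" by (rule AL4_rep3[OF A(4)])
  qed
qed

lemma AL_of_rep: assumes "leibniz cm" "is_rep cm L R" shows "anti_pre_leibniz sc pc"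
proof -
  have ir: "bilin L \<and> bilin R \<and> (\<forall>x y v. L (cm x y) v = L x (L y v) + - L y (L x v)) \<and>
     (\<forall>x y v. R (cm x y) v = L x (R y v) + - R y (L x v)) \<and> (\<forall>x y v. R y (L x v) = - R y (R x v))"
    using assms(2) unfolding is_rep_def vadd_eq vneg_eq .
  have r1: "\<And>x y v. L (cm x y) v = L x (L y v) - L y (L x v)"
    using ir by (simp only: diff_conv_add_uminus)
  have r2: "\<And>x y v. R (cm x y) v = L x (R y v) - R y (L x v)"
    using ir by (simp only: diff_conv_add_uminus)
  have r3: "\<And>x y v. R y (L x v) = - R y (R x v)"
    using ir by blast
  have hl: "\<And>x y z. cm x (cm y z) = cm (cm x y) z + cm y (cm x z)"
    using assms(1) unfolding leibniz_def vadd_eq by blast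
  have a2: "\<And>x y z. sc (cm x y) z = sc y (sc x z) - sc x (sc y z)" by (rule rep1_AL2[OF r1])
  have a3: "\<And>x y z. pc x (cm y z) = pc (sc y x) z - sc y (pc x z)" by (rule rep2_AL3[OF a2 r2])
  have a4: "\<And>x y z. pc (sc x y) z = - pc (pc y x) z" by (rule rep3_AL4[OF r3])
  have a1: "\<And>x y z. pc (cm x y) z = sc x (cm y z) - sc y (cm x z)" by (rule leib_AL1[OF a2 a3 a4 hl])
  show ?thesis using apl_iff a1 a2 a3 a4 by blast
qed

end
lemma Lmul_eta: "Lmul sc x = sc x" by (simp add: Lmul_def fun_eq_iff)
lemma Rmul_eta: "Rmul pc y = (\<lambda>w. pc w y)" by (simp add: Rmul_def fun_eq_iff)

lemma dpL: "bilin sc \<Longrightarrow> dpair w (vneg (dual_op (Lmul sc) x b)) = dpair (sc x w) b"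
  by (simp add: vneg_eq dp_neg2 dp_dual Lmul_eta bilin_lin1)
lemma dpR: "bilin sc \<Longrightarrow> bilin pc \<Longrightarrow>
   dpair w (vadd (dual_op (Lmul sc) y a) (dual_op (Rmul pc) y a)) = - dpair (sc y w) a - dpair (pc w y) a"
  by (simp add: vadd_eq dp_add2 dp_dual Lmul_eta Rmul_eta bilin_lin1 bilin_lin2)

lemma partA:
  fixes sc pc :: "('n::finite \<Rightarrow> 'k::field_char_0) \<Rightarrow> ('n \<Rightarrow> 'k) \<Rightarrow> ('n \<Rightarrow> 'k)"
  assumes apl: "anti_pre_leibniz sc pc"
  shows "leibniz (dsum_mult (\<lambda>x y. vadd (sc x y) (pc x y))
                 (\<lambda>x b. vneg (dual_op (Lmul sc) x b))
                 (\<lambda>y a. vadd (dual_op (Lmul sc) y a) (dual_op (Rmul pc) y a)))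
    \<and> cocycle (dsum_mult (\<lambda>x y. vadd (sc x y) (pc x y))
                 (\<lambda>x b. vneg (dual_op (Lmul sc) x b))
                 (\<lambda>y a. vadd (dual_op (Lmul sc) y a) (dual_op (Rmul pc) y a))) omega_p"
proof -
  have bsc: "bilin sc" and bpc: "bilin pc" using apl by (auto simp: anti_pre_leibniz_def)
  interpret p: pp sc pc "\<lambda>x y. vadd (sc x y) (pc x y)" "\<lambda>x b. vneg (dual_op (Lmul sc) x b)"
     "\<lambda>y a. vadd (dual_op (Lmul sc) y a) (dual_op (Rmul pc) y a)"
    apply unfold_locales
    apply (rule bsc) apply (rule bpc) apply (simp add: vadd_eq)
    apply (rule dpL[OF bsc]) apply (rule dpR[OF bsc bpc])
    done
  have lc: "leibniz (\<lambda>x y. vadd (sc x y) (pc x y))" by (rule p.leib_of_AL[OF apl])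
  have rp: "is_rep (\<lambda>x y. vadd (sc x y) (pc x y)) (\<lambda>x b. vneg (dual_op (Lmul sc) x b))
     (\<lambda>y a. vadd (dual_op (Lmul sc) y a) (dual_op (Rmul pc) y a))" by (rule p.rep_of_AL[OF apl])
  show ?thesis using semidirect_leibniz[OF lc rp] p.cocyc by blast
qed

lemma vscale_apply: "vscale c f i = c * f i" by (simp add: vscale_def)

lemma vscale_diff: "vscale c (x - y) = vscale c x - vscale c y"
  by (simp add: vscale_def fun_eq_iff algebra_simps)

lemma partB:
  fixes m l r :: "('n::finite \<Rightarrow> 'k::field_char_0) \<Rightarrow> ('n \<Rightarrow> 'k) \<Rightarrow> ('n \<Rightarrow> 'k)"
  assumes lm: "leibniz m" and rp: "is_rep m l r" and cc: "cocycle (dsum_mult m l r) omega_p"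
  shows "\<exists>sc' pc'. anti_pre_leibniz sc' pc' \<and> (\<forall>x y. vadd (sc' x y) (pc' x y) = m x y) \<and>
         (\<forall>x. l x = (\<lambda>b. vneg (dual_op (Lmul sc') x b))) \<and>
         (\<forall>y. r y = (\<lambda>a. vadd (dual_op (Lmul sc') y a) (dual_op (Rmul pc') y a)))"
proof -
  have bm: "bilin m" using lm by (simp add: leibniz_def)
  have bl: "bilin l" and br: "bilin r" using rp by (auto simp: is_rep_def)
  define sc' where "sc' = (\<lambda>x z. (\<lambda>i. dpair z (l x (unitv i))))"
  define pc' where "pc' = (\<lambda>x y. m x y - sc' x y)"
  have bsc: "bilin sc'" unfolding sc'_def
    by (rule bilinI) (simp_all add: fun_eq_iff dp_simps bl_add1[OF bl] bl_scale1[OF bl] vscale_apply)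
  have bpc: "bilin pc'" unfolding pc'_def
    by (rule bilinI) (simp_all add: bl_add1[OF bm] bl_add2[OF bm] bl_add1[OF bsc] bl_add2[OF bsc]
       bl_scale1[OF bm] bl_scale2[OF bm] bl_scale1[OF bsc] bl_scale2[OF bsc] vscale_diff)
  have PL: "dpair w (l x b) = dpair (sc' x w) b" for w x b
    unfolding sc'_def by (rule dp_recon[OF bilin_lin1[OF bl], symmetric])
  have rel: "dpair z (l x b) = dpair x (r z b) + dpair x (l z b) + dpair (m x z) b" for x z b
  proof -
    have "omega_p (case_sum z 0) (dsum_mult m l r (case_sum x 0) (case_sum 0 b)) =
      omega_p (case_sum x 0) (vadd (dsum_mult m l r (case_sum 0 b) (case_sum z 0)) (dsum_mult m l r (case_sum z 0) (case_sum 0 b)))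
      - omega_p (case_sum 0 b) (dsum_mult m l r (case_sum x 0) (case_sum z 0))"
      using cc unfolding cocycle_def by blast
    thus ?thesis
      by (simp add: omega_p_def vadd_eq dp_simps bl_zero1[OF bm] bl_zero2[OF bm] bl_zero1[OF bl]
           bl_zero2[OF bl] bl_zero1[OF br] bl_zero2[OF br] algebra_simps)
  qed
  have PR: "dpair w (r y a) = - dpair (sc' y w) a - dpair (pc' w y) a" for w y a
  proof -
    have "dpair (pc' w y) a = dpair (m w y) a - dpair y (l w a)"
      by (simp add: pc'_def dp_simps PL)
    moreover have "dpair (sc' y w) a = dpair w (l y a)" by (simp add: PL)
    ultimately show ?thesis using rel[where x=w and z=y and b=a] by algebra
  qed
  have cmdef: "m x y = sc' x y + pc' x y" for x y by (simp add: pc'_def)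
  interpret p: pp sc' pc' m l r
    by unfold_locales (rule bsc, rule bpc, rule cmdef, rule PL, rule PR)
  have apl: "anti_pre_leibniz sc' pc'" by (rule p.AL_of_rep[OF lm rp])
  have s1: "\<forall>x y. vadd (sc' x y) (pc' x y) = m x y" by (simp add: vadd_eq pc'_def)
  have s2: "\<forall>x. l x = (\<lambda>b. vneg (dual_op (Lmul sc') x b))"
  proof (intro allI)
    fix x show "l x = (\<lambda>b. vneg (dual_op (Lmul sc') x b))"
    proof (rule ext)
      fix b show "l x b = vneg (dual_op (Lmul sc') x b)"
        by (rule extS) (simp add: dpL[OF bsc] PL)
    qed
  qed
  have s3: "\<forall>y. r y = (\<lambda>a. vadd (dual_op (Lmul sc') y a) (dual_op (Rmul pc') y a))"
  proof (intro allI)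
    fix y show "r y = (\<lambda>a. vadd (dual_op (Lmul sc') y a) (dual_op (Rmul pc') y a))"
    proof (rule ext)
      fix a show "r y a = vadd (dual_op (Lmul sc') y a) (dual_op (Rmul pc') y a)"
        by (rule extS) (simp only: dpR[OF bsc bpc] PR)
    qed
  qed
  show ?thesis using apl s1 s2 s3 by blast
qed

theorem proposition2p16:
  fixes sc pc m :: "('n::finite \<Rightarrow> 'k::field_char_0) \<Rightarrow> ('n \<Rightarrow> 'k) \<Rightarrow> ('n \<Rightarrow> 'k)"
    and l r :: "('n \<Rightarrow> 'k) \<Rightarrow> ('n \<Rightarrow> 'k) \<Rightarrow> ('n \<Rightarrow> 'k)"
  shows
   "(anti_pre_leibniz sc pc \<longrightarrow>
      (let dm = dsum_mult (\<lambda>x y. vadd (sc x y) (pc x y))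
                 (\<lambda>x b. vneg (dual_op (Lmul sc) x b))
                 (\<lambda>y a. vadd (dual_op (Lmul sc) y a) (dual_op (Rmul pc) y a))
       in leibniz dm \<and> bilin_form omega_p \<and> nondegenerate omega_p \<and> skew_sym omega_p
          \<and> cocycle dm omega_p))
    \<and>
    (leibniz m \<and> is_rep m l r \<and> cocycle (dsum_mult m l r) omega_p \<longrightarrow>
      (\<exists>sc' pc'. anti_pre_leibniz sc' pc' \<and> (\<forall>x y. vadd (sc' x y) (pc' x y) = m x y) \<and>
         (\<forall>x. l x = (\<lambda>b. vneg (dual_op (Lmul sc') x b))) \<and>
         (\<forall>y. r y = (\<lambda>a. vadd (dual_op (Lmul sc') y a) (dual_op (Rmul pc') y a)))))"

proof (rule conjI)
  show "anti_pre_leibniz sc pc \<longrightarrow>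
      (let dm = dsum_mult (\<lambda>x y. vadd (sc x y) (pc x y))
                 (\<lambda>x b. vneg (dual_op (Lmul sc) x b))
                 (\<lambda>y a. vadd (dual_op (Lmul sc) y a) (dual_op (Rmul pc) y a))
       in leibniz dm \<and> bilin_form omega_p \<and> nondegenerate omega_p \<and> skew_sym omega_p
          \<and> cocycle dm omega_p)"
    using partA omega_bilin omega_nondeg omega_skew unfolding Let_def by blast
  show "leibniz m \<and> is_rep m l r \<and> cocycle (dsum_mult m l r) omega_p \<longrightarrow>
      (\<exists>sc' pc'. anti_pre_leibniz sc' pc' \<and> (\<forall>x y. vadd (sc' x y) (pc' x y) = m x y) \<and>
         (\<forall>x. l x = (\<lambda>b. vneg (dual_op (Lmul sc') x b))) \<and>
         (\<forall>y. r y = (\<lambda>a. vadd (dual_op (Lmul sc') y a) (dual_op (Rmul pc') y a))))"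
    using partB by blast
qed

end
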